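(* Let $p,n,m,N$ be strictly positive integers with $\gcd(n,m)=1$ and $s=\gcd(m,N)>1$; write $m=sm_1$. Let $a_1,\dots,a_N$ be pairwise distinct complex numbers, $\theta_1,\dots,\theta_N\in\mathbb{C}$, $c_1,\dots,c_{p-1}\in\mathbb{C}$, and $\beta_k^{(i)}=\theta_i-\frac{(k-1)n}{m}$ for $k=1,\dots,p$, $i=1,\dots,N$. Let $B^{(1)},\dots,B^{(N)}$ be the upper triangular $p\times p$ matrices with $B^{(i)}_{kk}=\beta_k^{(i)}$, $B^{(i)}_{kl}=0$ if $l<k$ or if $l>k$ and $(l-k)/m_1\notin\mathbb{Z}$, and, if $l>k$ and $(l-k)/m_1\in\mathbb{Z}$, $$B^{(i)}_{kl}=c_{l-k}\sum_{k_1+\dots+k_N+q=N\frac{(l-k)n}{m}}(-1)^q\binom{(l-k)n/m}{k_1}\cdots\binom{(l-k)n/m}{k_N}a_1^{k_1}\cdots a_N^{k_N}a_i^q,$$ the sum being over nonnegative integers $k_1,\dots,k_N,q$. For $j=1,\dots,p-1$ let $$R_j(z)=-\frac{m\,c_j}{jn}\sum_{k_1+\dots+k_N+q=N\frac{jn}{m}}(-1)^q\binom{jn/m}{k_1}\cdots\binom{jn/m}{k_N}a_1^{k_1}\cdots a_N^{k_N}z^q\ \text{ if } j/m_1\in\mathbb{Z},\qquad R_j(z)=0\ \text{ if } j/m_1\notin\mathbb{Z}.$$ Let $D=\mathrm{diag}\big(\prod_{i=1}^N(z-a_i)^{\beta_1^{(i)}},\dots,\prod_{i=1}^N(z-a_i)^{\beta_p^{(i)}}\big)$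 and let $M$ be the upper triangular $p\times p$ matrix with $M_{kk}=1$, $M_{kl}=0$ for $l<k$, and for $l>k$ $$M_{kl}=\sum_{q\vdash(l-k)}\prod_{j=1}^{l-k}\frac{R_j^{\sigma_q(j)}}{\sigma_q(j)!}.$$ Then $\Phi=MD$ solves the Fuchsian system $\frac{\mathrm{d}\Phi}{\mathrm{d}z}=\sum_{i=1}^N\frac{B^{(i)}}{z-a_i}\Phi$ on $\mathbb{C}\setminus\{a_1,\dots,a_N\}$.
   Context: Generalized binomial coefficients: $\binom{\beta}{j}=\frac{\beta(\beta-1)\cdots(\beta-j+1)}{j!}$ for $\beta\in\mathbb{R}$, $j\in\mathbb{N}$, and $\binom{\beta}{0}=1$. In the sums over partitions, $q\vdash(l-k)$ ranges over the partitions of the integer $l-k$ and $\sigma_q(j)$ is the number of parts of $q$ equal to $j$. Powers $(z-a_i)^\beta$ are understood via a chosen branch and analytic continuation. *)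

theory Defs
  imports "HOL-Analysis.Analysis" "HOL-Library.Multiset"
begin

text \<open>Indices of matrices run over 1..p, the points a_i over i = 1..N.\<close>

definition bsum :: "nat \<Rightarrow> (nat \<Rightarrow> complex) \<Rightarrow> complex \<Rightarrow> nat \<Rightarrow> complex \<Rightarrow> complex" where
  "bsum N a e K w =
     (\<Sum>k\<in>{k::nat\<Rightarrow>nat. (\<forall>i. k i \<noteq> 0 \<longrightarrow> i \<in> {1..N}) \<and> sum k {1..N} \<le> K}.
        (-1) ^ (K - sum k {1..N}) * (\<Prod>i=1..N. (e gchoose k i) * a i ^ k i)
        * w ^ (K - sum k {1..N}))"

definition beta :: "nat \<Rightarrow> nat \<Rightarrow> (nat \<Rightarrow> complex) \<Rightarrow> nat \<Rightarrow> nat \<Rightarrow> complex" where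
  "beta n m \<theta> i k = \<theta> i - of_nat ((k - 1) * n) / of_nat m"

text \<open>The matrices B^(i); m1 = m / gcd(m,N). For m1 dvd d, N d n / m is an integer.\<close>
definition Bmat :: "nat \<Rightarrow> nat \<Rightarrow> nat \<Rightarrow> nat \<Rightarrow> (nat \<Rightarrow> complex) \<Rightarrow> (nat \<Rightarrow> complex)
    \<Rightarrow> (nat \<Rightarrow> complex) \<Rightarrow> nat \<Rightarrow> nat \<Rightarrow> nat \<Rightarrow> complex" where
  "Bmat N n m m1 a \<theta> c i k l =
     (if k = l then beta n m \<theta> i k
      else if k < l \<and> m1 dvd (l - k) then
        c (l - k) * bsum N a (of_nat ((l - k) * n) / of_nat m) (N * (l - k) * n div m) (a i)
      else 0)"

definition Rfun :: "nat \<Rightarrow> nat \<Rightarrow> nat \<Rightarrow> nat \<Rightarrow> (nat \<Rightarrow> complex) \<Rightarrow> (nat \<Rightarrow> complex)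
    \<Rightarrow> nat \<Rightarrow> complex \<Rightarrow> complex" where
  "Rfun N n m m1 a c j z =
     (if m1 dvd j then
        - (of_nat m * c j / (of_nat j * of_nat n))
          * bsum N a (of_nat (j * n) / of_nat m) (N * j * n div m) z
      else 0)"

text \<open>Partitions of d, as multisets of positive integers summing to d;
  sigma_q(j) = count q j.\<close>
definition partitions_of :: "nat \<Rightarrow> nat multiset set" where
  "partitions_of d = {q. set_mset q \<subseteq> {1..d} \<and> sum_mset q = d}"

definition Mmat :: "nat \<Rightarrow> nat \<Rightarrow> nat \<Rightarrow> nat \<Rightarrow> (nat \<Rightarrow> complex) \<Rightarrow> (nat \<Rightarrow> complex)
    \<Rightarrow> nat \<Rightarrow> nat \<Rightarrow> complex \<Rightarrow> complex" where
  "Mmat N n m m1 a c k l z =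
     (if k = l then 1
      else if l < k then 0
      else (\<Sum>q\<in>partitions_of (l - k).
              \<Prod>j=1..l - k. Rfun N n m m1 a c j z ^ count q j / fact (count q j)))"

end

theory Submission
  imports Defs "HOL-Computational_Algebra.Formal_Power_Series"
begin

no_notation vec_nth (infixl \<open>$\<close> 90)
notation fps_nth (infixl \<open>$\<close> 75)

definition hh :: "complex \<Rightarrow> complex \<Rightarrow> complex fps" where
  "hh e a = Abs_fps (\<lambda>n. (e gchoose n) * (-a)^n)"
definition Pt :: "complex \<Rightarrow> complex fps" where
  "Pt a = Abs_fps (\<lambda>v. if v = 0 then 0 else a^v)"

lemma aX_nth: "(fps_const (a::complex) * fps_X * (f::complex fps)) $ n = (if n = 0 then 0 else a * f $ (n - 1))"
proof -
  have "fps_const a * fps_X * f = fps_const a * (fps_X * f)" by (simp add: mult.assoc)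
  then show ?thesis by (simp only: fps_mult_left_const_nth fps_X_mult_nth) simp
qed

lemma u_nth: "((1 - fps_const (a::complex) * fps_X) * (f::complex fps)) $ n = f $ n - (if n = 0 then 0 else a * f $ (n - 1))"
proof -
  have "(1 - fps_const a * fps_X) * f = f - fps_const a * fps_X * f" by (simp add: algebra_simps)
  then show ?thesis by (simp only: fps_sub_nth aX_nth)
qed

lemma alg1: "(e - nn) * C * (- a * x) - a * (nn * C * x) = - (e*a) * (C * (x::complex))"
  by (simp add: algebra_simps)

lemma hh_ode1: "(1 - fps_const a * fps_X) * fps_deriv (hh e a) = - fps_const (e*a) * hh e a"
proof (rule fps_ext)
  fix n
  show "((1 - fps_const a * fps_X) * fps_deriv (hh e a)) $ n = (- fps_const (e*a) * hh e a) $ n"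
  proof (cases n)
    case 0 then show ?thesis by (simp add: hh_def u_nth)
  next
    case (Suc k)
    have g: "of_nat (Suc n) * (e gchoose Suc n) = (e - of_nat n) * (e gchoose n)"
      using gbinomial_mult_1[of e n] by (simp add: algebra_simps)
    have g2: "of_nat (Suc k) * (e gchoose Suc k) = (e - of_nat k) * (e gchoose k)"
      using gbinomial_mult_1[of e k] by (simp add: algebra_simps)
    have "((1 - fps_const a * fps_X) * fps_deriv (hh e a)) $ n
        = fps_deriv (hh e a) $ n - a * fps_deriv (hh e a) $ k"
      using Suc by (simp only: u_nth) simp
    also have "\<dots> = of_nat (Suc n) * (e gchoose Suc n) * (-a)^(Suc n) - a * (of_nat (Suc k) * (e gchoose Suc k) * (-a)^(Suc k))"
      using Suc by (simp add: hh_def)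
    also have "\<dots> = (e - of_nat n) * (e gchoose n) * (-a)^(Suc n) - a * (of_nat n * (e gchoose n) * (-a)^n)"
    proof -
      have h1: "of_nat (Suc n) * (e gchoose Suc n) * (-a)^(Suc n) = (e - of_nat n) * (e gchoose n) * (-a)^(Suc n)"
        using g by simp
      have h2: "of_nat (Suc k) * (e gchoose Suc k) * (-a)^(Suc k) = of_nat n * (e gchoose n) * (-a)^n"
        using Suc by simp
      show ?thesis unfolding h1 h2 ..
    qed
    also have "\<dots> = - (e*a) * ((e gchoose n) * (-a)^n)"
      by (simp only: power_Suc alg1)
    finally show ?thesis by (simp add: hh_def)
  qed
qed

lemma Pt_eq: "(1 - fps_const a * fps_X) * Pt a = fps_const a * fps_X"
proof (rule fps_ext)
  fix n
  show "((1 - fps_const a * fps_X) * Pt a) $ n = (fps_const a * fps_X) $ n"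
    unfolding u_nth by (cases n) (auto simp: Pt_def)
qed

lemma hh_ode: "fps_X * fps_deriv (hh e a) = - fps_const e * hh e a * Pt a"
proof -
  let ?u = "1 - fps_const a * fps_X :: complex fps"
  have u0: "?u \<noteq> 0"
  proof
    assume "?u = 0" then have "?u $ 0 = 0" by simp
    then show False by simp
  qed
  have "?u * (fps_X * fps_deriv (hh e a) + fps_const e * hh e a * Pt a)
     = fps_X * (?u * fps_deriv (hh e a)) + fps_const e * hh e a * (?u * Pt a)"
    by (simp add: algebra_simps)
  also have "\<dots> = 0" unfolding hh_ode1 Pt_eq fps_const_mult[symmetric]
    by (simp add: algebra_simps del: fps_const_mult)
  finally have "fps_X * fps_deriv (hh e a) + fps_const e * hh e a * Pt a = 0"
    using u0 by simp
  then have "fps_X * fps_deriv (hh e a) = - (fps_const e * hh e a * Pt a)"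
    by (simp only: eq_neg_iff_add_eq_0)
  then show ?thesis by (simp only: mult_minus_left)
qed

lemma prod_ode:
  assumes "finite I"
  shows "fps_X * fps_deriv (\<Prod>i\<in>I. hh e (a i)) = - fps_const e * (\<Prod>i\<in>I. hh e (a i)) * (\<Sum>i\<in>I. Pt (a i))"
  using assms
proof (induction I rule: finite_induct)
  case empty then show ?case by simp
next
  case (insert x F)
  let ?G = "\<Prod>i\<in>F. hh e (a i)"
  have "fps_X * fps_deriv (\<Prod>i\<in>insert x F. hh e (a i))
      = (fps_X * fps_deriv (hh e (a x))) * ?G + hh e (a x) * (fps_X * fps_deriv ?G)"
    using insert by (simp add: algebra_simps)
  also have "\<dots> = - fps_const e * (hh e (a x) * ?G) * (Pt (a x) + (\<Sum>i\<in>F. Pt (a i)))"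
    unfolding hh_ode insert.IH by (simp add: algebra_simps)
  finally show ?case using insert by simp
qed

lemma cmult_nth: "(- fps_const (e::complex) * G * S) $ u = - e * (\<Sum>s=0..u. G $ s * S $ (u - s))"
proof -
  have "- fps_const e * G * S = fps_const (-e) * (G * S)" by (simp add: mult.assoc)
  then show ?thesis by (simp only: fps_mult_left_const_nth) (simp add: fps_mult_nth sum_distrib_left)
qed

lemma newton:
  fixes e :: complex and a :: "nat \<Rightarrow> complex"
  assumes "finite I"
  defines "G \<equiv> \<Prod>i\<in>I. hh e (a i)"
  shows "of_nat u * G $ u = - e * (\<Sum>s=0..u. G $ s * (if u - s = 0 then 0 else (\<Sum>i\<in>I. a i ^ (u - s))))"
proof -
  have "(fps_X * fps_deriv G) $ u = (- fps_const e * G * (\<Sum>i\<in>I. Pt (a i))) $ u"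
    using prod_ode[OF assms(1)] unfolding G_def by simp
  moreover have "(fps_X * fps_deriv G) $ u = of_nat u * G $ u"
    by (cases u) auto
  moreover have "(- fps_const e * G * (\<Sum>i\<in>I. Pt (a i))) $ u = - e * (\<Sum>s=0..u. G $ s * (\<Sum>i\<in>I. Pt (a i)) $ (u - s))"
    by (rule cmult_nth)
  moreover have "\<And>v. (\<Sum>i\<in>I. Pt (a i)) $ v = (if v = 0 then 0 else (\<Sum>i\<in>I. a i ^ v))"
    by (simp add: fps_sum_nth Pt_def)
  ultimately show ?thesis by simp
qed



lemma size_sum_count:
  assumes "finite A" "set_mset X \<subseteq> A"
  shows "size X = sum (count X) A"
proof -
  have "size X = sum (count X) (set_mset X)" by (simp add: size_multiset_overloaded_eq)
  also have "\<dots> = sum (count X) A"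
    by (rule sum.mono_neutral_left) (use assms in \<open>auto simp: not_in_iff\<close>)
  finally show ?thesis .
qed

lemma T_eq:
  "{k::nat\<Rightarrow>nat. (\<forall>i. k i \<noteq> 0 \<longrightarrow> i \<in> {1..N}) \<and> sum k {1..N} \<le> K}
     = count ` {X. set_mset X \<subseteq> {1..N} \<and> size X \<le> K}"
proof (intro equalityI subsetI)
  fix k assume k: "k \<in> {k::nat\<Rightarrow>nat. (\<forall>i. k i \<noteq> 0 \<longrightarrow> i \<in> {1..N}) \<and> sum k {1..N} \<le> K}"
  have fin: "finite {x. 0 < k x}"
    by (rule finite_subset[of _ "{1..N}"]) (use k in auto)
  let ?X = "Abs_multiset k"
  have c: "count ?X = k" using count_Abs_multiset[OF fin] .
  have s: "set_mset ?X \<subseteq> {1..N}" using k c by (auto simp: set_mset_def)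
  have "size ?X = sum k {1..N}" using size_sum_count[OF _ s] c by simp
  then show "k \<in> count ` {X. set_mset X \<subseteq> {1..N} \<and> size X \<le> K}"
    using k s c by (intro image_eqI[of _ _ ?X]) auto
next
  fix k assume "k \<in> count ` {X. set_mset X \<subseteq> {1..N} \<and> size X \<le> K}"
  then obtain X where X0: "X \<in> {X. set_mset X \<subseteq> {1..N} \<and> size X \<le> K}" and kX: "k = count X"
    by (rule imageE)
  from X0 have X1: "set_mset X \<subseteq> {1..N}" and X2: "size X \<le> K" by simp_all
  have sz: "size X = sum (count X) {1..N}" by (rule size_sum_count[OF _ X1]) simp
  have A: "\<forall>i. count X i \<noteq> 0 \<longrightarrow> i \<in> {1..N}"
  proof (intro allI impI)
    fix i assume "count X i \<noteq> 0"
    then have "i \<in># X" by (simp add: count_eq_zero_iff)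
    then show "i \<in> {1..N}" using X1 by blast
  qed
  have B: "sum (count X) {1..N} \<le> K" unfolding sz[symmetric] by (rule X2)
  show "k \<in> {k::nat\<Rightarrow>nat. (\<forall>i. k i \<noteq> 0 \<longrightarrow> i \<in> {1..N}) \<and> sum k {1..N} \<le> K}"
    unfolding kX using A B by blast
qed

lemma negpow: "(- x) ^ n = (-1) ^ n * (x::complex) ^ n"
proof -
  have "- x = (-1) * x" by simp
  then show ?thesis by (simp only: power_mult_distrib)
qed

lemma bsum_fps:
  fixes e w :: complex
  shows "bsum N a e K w = (\<Sum>s\<le>K. (-1)^K * (\<Prod>i\<in>{1..N}. hh e (a i)) $ s * w ^ (K - s))"
proof -
  let ?MS = "{X. set_mset X \<subseteq> {1..N} \<and> size X \<le> K}"
  let ?f = "\<lambda>k::nat\<Rightarrow>nat. (-1) ^ (K - sum k {1..N}) * (\<Prod>i=1..N. (e gchoose k i) * a i ^ k i)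
        * w ^ (K - sum k {1..N})"
  have inj: "inj_on count ?MS" by (auto intro: inj_onI simp: count_inject)
  have finMS: "finite ?MS"
  proof -
    have "?MS \<subseteq> (\<Union>s\<le>K. multisets_of_size {1..N} s)" by (auto simp: multisets_of_size_def)
    then show ?thesis by (rule finite_subset) (auto intro: finite_multisets_of_size)
  qed
  have "bsum N a e K w = (\<Sum>X\<in>?MS. ?f (count X))"
    unfolding bsum_def T_eq by (rule sum.reindex[OF inj, unfolded comp_def])
  also have "\<dots> = (\<Sum>s\<le>K. \<Sum>X\<in>{X\<in>?MS. size X = s}. ?f (count X))"
    by (rule sum.group[symmetric]) (use finMS in auto)
  also have "\<dots> = (\<Sum>s\<le>K. (-1)^K * (\<Prod>i\<in>{1..N}. hh e (a i)) $ s * w ^ (K - s))"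
  proof (rule sum.cong[OF refl])
    fix s assume s: "s \<in> {..K}"
    have eqset: "{X\<in>?MS. size X = s} = multisets_of_size {1..N} s"
      using s by (auto simp: multisets_of_size_def)
    have "(\<Sum>X\<in>{X\<in>?MS. size X = s}. ?f (count X))
        = (\<Sum>X\<in>multisets_of_size {1..N} s. (-1)^K * w ^ (K - s) * (\<Prod>i\<in>{1..N}. hh e (a i) $ count X i))"
      unfolding eqset
    proof (rule sum.cong[OF refl])
      fix X assume X: "X \<in> multisets_of_size {1..N} s"
      have X1: "set_mset X \<subseteq> {1..N}" and X2: "size X = s" using X by (simp_all add: multisets_of_size_def)
      have h1: "size X = sum (count X) {1..N}" by (rule size_sum_count[OF _ X1]) simp
      have sz: "sum (count X) {1..N} = s" by (simp only: h1[symmetric] X2)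
      have sgn: "(-1::complex) ^ (K - s) = (-1)^K * (-1)^s"
      proof -
        have sK: "s \<le> K" using s by simp
        have one: "(-1::complex) ^ s * (-1) ^ s = 1" by (rule minus_one_mult_self)
        have "(-1::complex)^K = (-1)^(K-s) * (-1)^s" using power_add[of "-1::complex" "K-s" s] sK by simp
        then have "(-1::complex)^K * (-1)^s = (-1)^(K-s) * ((-1)^s * (-1)^s)" by (simp only: mult.assoc)
        then show ?thesis unfolding one by simp
      qed
      have pr: "(\<Prod>i\<in>{1..N}. hh e (a i) $ count X i) = (-1)^s * (\<Prod>i=1..N. (e gchoose count X i) * a i ^ count X i)"
      proof -
        have "(\<Prod>i\<in>{1..N}. hh e (a i) $ count X i) = (\<Prod>i\<in>{1..N}. (-1) ^ count X i * ((e gchoose count X i) * a i ^ count X i))"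
          by (rule prod.cong[OF refl]) (simp only: hh_def fps_nth_Abs_fps negpow[of "a _"] mult_ac)
        also have "\<dots> = (-1) ^ (sum (count X) {1..N}) * (\<Prod>i=1..N. (e gchoose count X i) * a i ^ count X i)"
          by (simp only: prod.distrib power_sum)
        finally show ?thesis using sz by simp
      qed
      show "?f (count X) = (-1)^K * w ^ (K - s) * (\<Prod>i\<in>{1..N}. hh e (a i) $ count X i)"
        unfolding pr sz sgn by (simp only: mult_ac)
    qed
    also have "\<dots> = (-1)^K * w ^ (K - s) * (\<Prod>i\<in>{1..N}. hh e (a i)) $ s"
      by (simp add: fps_prod_nth' sum_distrib_left)
    finally show "(\<Sum>X\<in>{X\<in>?MS. size X = s}. ?f (count X)) = (-1)^K * (\<Prod>i\<in>{1..N}. hh e (a i)) $ s * w ^ (K - s)"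
      by (simp add: algebra_simps)
  qed
  finally show ?thesis .
qed



lemma newton2:
  fixes e :: complex and a :: "nat \<Rightarrow> complex"
  assumes KN: "of_nat K = of_nat N * e" and u: "u < K"
  defines "G \<equiv> \<Prod>i\<in>{1..N}. hh e (a i)"
  shows "of_nat (K - u) * G $ u = e * (\<Sum>s\<le>u. G $ s * (\<Sum>i=1..N. a i ^ (u - s)))"
proof -
  have nw: "of_nat u * G $ u = - e * (\<Sum>s=0..u. G $ s * (if u - s = 0 then 0 else (\<Sum>i\<in>{1..N}. a i ^ (u - s))))"
    unfolding G_def by (rule newton) simp
  have split: "(\<Sum>s\<le>u. G $ s * (\<Sum>i=1..N. a i ^ (u - s)))
     = (\<Sum>s=0..u. G $ s * (if u - s = 0 then 0 else (\<Sum>i\<in>{1..N}. a i ^ (u - s)))) + G $ u * of_nat N"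
  proof -
    have "(\<Sum>s\<le>u. G $ s * (\<Sum>i=1..N. a i ^ (u - s)))
       = (\<Sum>s\<le>u. G $ s * (if u - s = 0 then 0 else (\<Sum>i\<in>{1..N}. a i ^ (u - s))) + (if s = u then G $ u * of_nat N else 0))"
      by (rule sum.cong[OF refl]) auto
    also have "\<dots> = (\<Sum>s=0..u. G $ s * (if u - s = 0 then 0 else (\<Sum>i\<in>{1..N}. a i ^ (u - s)))) + G $ u * of_nat N"
      by (simp add: sum.distrib atLeast0AtMost)
    finally show ?thesis .
  qed
  have k: "(of_nat (K - u)::complex) = e * of_nat N - of_nat u" using u KN by (simp add: of_nat_diff)
  have alg: "(e * NN - uu) * g = e * (S + g * NN)" if "uu * g = - e * S" for NN uu g S :: complex
    using that by algebra
  show ?thesis unfolding split k by (rule alg[OF nw])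
qed

lemma pdiff: "z \<noteq> (b::complex) \<Longrightarrow> (z ^ n - b ^ n) / (z - b) = (\<Sum>j<n. z ^ (n - Suc j) * b ^ j)"
proof -
  assume zb: "z \<noteq> b"
  have "b ^ n - z ^ n = (b - z) * (\<Sum>j<n. z ^ (n - Suc j) * b ^ j)" by (rule power_diff_sumr2)
  then have "z ^ n - b ^ n = (z - b) * (\<Sum>j<n. z ^ (n - Suc j) * b ^ j)"
    by (simp add: algebra_simps)
  then show ?thesis using zb by simp
qed

lemma F_ident:
  fixes e z :: complex and a :: "nat \<Rightarrow> complex" and \<gamma> :: "nat \<Rightarrow> complex"
  assumes z: "\<And>i. i \<in> {1..N} \<Longrightarrow> z \<noteq> a i"
    and rec: "\<And>u. u < K \<Longrightarrow> of_nat (K - u) * \<gamma> u = e * (\<Sum>s\<le>u. \<gamma> s * (\<Sum>i=1..N. a i ^ (u - s)))"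
  shows "(\<Sum>s\<le>K. \<gamma> s * (of_nat (K - s) * z ^ (K - s - 1)))
       = e * (\<Sum>i=1..N. ((\<Sum>s\<le>K. \<gamma> s * z ^ (K - s)) - (\<Sum>s\<le>K. \<gamma> s * a i ^ (K - s))) / (z - a i))"
proof -
  define p where "p j = (\<Sum>i=1..N. a i ^ j)" for j
  have "(\<Sum>i=1..N. ((\<Sum>s\<le>K. \<gamma> s * z ^ (K - s)) - (\<Sum>s\<le>K. \<gamma> s * a i ^ (K - s))) / (z - a i))
      = (\<Sum>i=1..N. \<Sum>s\<le>K. \<gamma> s * ((z ^ (K - s) - a i ^ (K - s)) / (z - a i)))"
    by (simp add: sum_subtractf[symmetric] sum_divide_distrib algebra_simps)
  also have "\<dots> = (\<Sum>i=1..N. \<Sum>s\<le>K. \<Sum>j<K - s. \<gamma> s * z ^ (K - s - Suc j) * a i ^ j)"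
    using z by (simp add: pdiff sum_distrib_left mult.assoc)
  also have "\<dots> = (\<Sum>s\<le>K. \<Sum>i=1..N. \<Sum>j<K - s. \<gamma> s * z ^ (K - s - Suc j) * a i ^ j)"
    by (rule sum.swap)
  also have "\<dots> = (\<Sum>s\<le>K. \<Sum>j<K - s. \<Sum>i=1..N. \<gamma> s * z ^ (K - s - Suc j) * a i ^ j)"
    by (rule sum.cong[OF refl], rule sum.swap)
  also have "\<dots> = (\<Sum>s\<le>K. \<Sum>j<K - s. \<gamma> s * z ^ (K - s - Suc j) * p j)"
    by (simp add: p_def sum_distrib_left)
  also have "\<dots> = (\<Sum>s<K. \<Sum>j<K - s. \<gamma> s * z ^ (K - s - Suc j) * p j)"
    by (simp add: lessThan_Suc_atMost[symmetric])
  also have "\<dots> = (\<Sum>(s,j)\<in>{(s,j). s + j < K}. \<gamma> s * z ^ (K - s - Suc j) * p j)"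
  proof -
    have "{(s,j). s + j < K} = Sigma {..<K} (\<lambda>s. {..<K - s})" by auto
    then show ?thesis by (simp add: sum.Sigma)
  qed
  also have "\<dots> = (\<Sum>u<K. \<Sum>s\<le>u. \<gamma> s * z ^ (K - s - Suc (u - s)) * p (u - s))"
    by (rule sum.triangle_reindex)
  also have "\<dots> = (\<Sum>u<K. z ^ (K - Suc u) * (\<Sum>s\<le>u. \<gamma> s * p (u - s)))"
    by (rule sum.cong[OF refl], simp add: sum_distrib_left, rule sum.cong[OF refl]) (simp add: algebra_simps)
  finally have R: "(\<Sum>i=1..N. ((\<Sum>s\<le>K. \<gamma> s * z ^ (K - s)) - (\<Sum>s\<le>K. \<gamma> s * a i ^ (K - s))) / (z - a i))
     = (\<Sum>u<K. z ^ (K - Suc u) * (\<Sum>s\<le>u. \<gamma> s * p (u - s)))" .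
  have L: "(\<Sum>s\<le>K. \<gamma> s * (of_nat (K - s) * z ^ (K - s - 1))) = (\<Sum>u<K. \<gamma> u * (of_nat (K - u) * z ^ (K - Suc u)))"
    by (simp add: lessThan_Suc_atMost[symmetric])
  show ?thesis unfolding L R sum_distrib_left[of e]
  proof (rule sum.cong[OF refl])
    fix u assume "u \<in> {..<K}"
    then have "of_nat (K - u) * \<gamma> u = e * (\<Sum>s\<le>u. \<gamma> s * p (u - s))" using rec p_def by simp
    then show "\<gamma> u * (of_nat (K - u) * z ^ (K - Suc u)) = e * (z ^ (K - Suc u) * (\<Sum>s\<le>u. \<gamma> s * p (u - s)))"
      by (simp add: algebra_simps)
  qed
qed



definition W :: "nat \<Rightarrow> (nat \<Rightarrow> complex) \<Rightarrow> nat multiset \<Rightarrow> complex" where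
  "W d R q = (\<Prod>j=1..d. R j ^ count q j / fact (count q j))"

definition PP :: "(nat \<Rightarrow> complex) \<Rightarrow> nat \<Rightarrow> complex" where
  "PP R d = (\<Sum>q\<in>partitions_of d. W d R q)"

lemma size_le_sum_mset: "set_mset (q::nat multiset) \<subseteq> {1..} \<Longrightarrow> size q \<le> sum_mset q"
  by (induction q) auto

lemma mem_le_sum_mset: "(x::nat) \<in># q \<Longrightarrow> x \<le> sum_mset q"
  by (induction q) auto

lemma sum_mset_count:
  assumes "finite A" "set_mset (q::nat multiset) \<subseteq> A"
  shows "sum_mset q = (\<Sum>j\<in>A. j * count q j)"
  using assms(2)
proof (induction q)
  case empty then show ?case by simp
next
  case (add x q)
  have "(\<Sum>j\<in>A. j * count (add_mset x q) j) = (\<Sum>j\<in>A. j * count q j + (if j = x then x else 0))"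
    by (rule sum.cong) auto
  also have "\<dots> = (\<Sum>j\<in>A. j * count q j) + x"
    using add.prems assms(1) by (simp add: sum.distrib)
  finally show ?case using add by simp
qed

lemma finite_partitions: "finite (partitions_of d)"
proof -
  have "partitions_of d \<subseteq> (\<Union>s\<le>d. multisets_of_size {1..d} s)"
  proof
    fix q assume q: "q \<in> partitions_of d"
    then have "set_mset q \<subseteq> {1..}" by (auto simp: partitions_of_def)
    then have "size q \<le> d" using size_le_sum_mset[of q] q by (auto simp: partitions_of_def)
    then show "q \<in> (\<Union>s\<le>d. multisets_of_size {1..d} s)" using q
      by (auto simp: partitions_of_def multisets_of_size_def)
  qed
  then show ?thesis by (rule finite_subset) (auto intro: finite_multisets_of_size)
qed

lemma W_mono:
  assumes "d' \<le> D" "set_mset q \<subseteq> {1..d'}"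
  shows "W D R q = W d' R q"
proof -
  have z: "count q i = 0" if "i \<in> {1..D} - {1..d'}" for i
  proof -
    have "i \<notin># q" using that assms(2) by auto
    then show ?thesis by (simp add: count_eq_zero_iff)
  qed
  show ?thesis unfolding W_def
    by (rule prod.mono_neutral_left[symmetric]) (use assms z in auto)
qed

lemma W_remove:
  assumes j: "j \<in> {1..D}" and c: "j \<in># q"
  shows "of_nat (count q j) * W D R q = R j * W D R (q - {#j#})"
proof -
  let ?f = "\<lambda>q j. R j ^ count q j / fact (count q j)"
  have r: "(\<Prod>i\<in>{1..D}-{j}. ?f q i) = (\<Prod>i\<in>{1..D}-{j}. ?f (q - {#j#}) i)"
    by (rule prod.cong) auto
  obtain c' where c': "count q j = Suc c'" using c by (metis count_eq_zero_iff not0_implies_Suc)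
  have cj: "count (q - {#j#}) j = c'" using c' by simp
  have key: "of_nat (count q j) * ?f q j = R j * ?f (q - {#j#}) j"
  proof -
    have f: "(fact (Suc c') :: complex) = of_nat (Suc c') * fact c'" by (rule fact_Suc)
    have n0: "(of_nat (Suc c') :: complex) \<noteq> 0" by (rule of_nat_neq_0)
    have n1: "(fact c' :: complex) \<noteq> 0" by simp
    show ?thesis unfolding cj c' f using n0 n1
      by (simp only: power_Suc) (simp add: field_simps del: of_nat_Suc)
  qed
  have w1: "W D R q = ?f q j * (\<Prod>i\<in>{1..D}-{j}. ?f q i)"
    unfolding W_def by (rule prod.remove[OF finite_atLeastAtMost j])
  have w2: "W D R (q - {#j#}) = ?f (q - {#j#}) j * (\<Prod>i\<in>{1..D}-{j}. ?f (q - {#j#}) i)"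
    unfolding W_def by (rule prod.remove[OF finite_atLeastAtMost j])
  have "of_nat (count q j) * W D R q = (of_nat (count q j) * ?f q j) * (\<Prod>i\<in>{1..D}-{j}. ?f q i)"
    unfolding w1 by (rule mult.assoc[symmetric])
  also have "\<dots> = R j * (?f (q - {#j#}) j * (\<Prod>i\<in>{1..D}-{j}. ?f (q - {#j#}) i))"
    unfolding key r by (rule mult.assoc)
  finally show ?thesis unfolding w2 .
qed

lemma partitions_0: "partitions_of 0 = {{#}}"
  by (auto simp: partitions_of_def)

lemma PP_0: "PP R 0 = 1"
  by (simp add: PP_def partitions_0 W_def)

lemma PP_rec: "of_nat d * PP R d = (\<Sum>j=1..d. of_nat j * R j * PP R (d - j))"
proof -
  have "of_nat d * PP R d = (\<Sum>q\<in>partitions_of d. \<Sum>j=1..d. of_nat j * (of_nat (count q j) * W d R q))"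
    unfolding PP_def sum_distrib_left
  proof (rule sum.cong[OF refl])
    fix q assume q: "q \<in> partitions_of d"
    then have "d = (\<Sum>j\<in>{1..d}. j * count q j)"
      using sum_mset_count[of "{1..d}" q] by (auto simp: partitions_of_def)
    then have "(of_nat d :: complex) = (\<Sum>j=1..d. of_nat j * of_nat (count q j))"
      by (metis (mono_tags, lifting) of_nat_mult of_nat_sum sum.cong)
    then show "of_nat d * W d R q = (\<Sum>j=1..d. of_nat j * (of_nat (count q j) * W d R q))"
      by (simp add: sum_distrib_right mult.assoc)
  qed
  also have "\<dots> = (\<Sum>j=1..d. of_nat j * (\<Sum>q\<in>partitions_of d. of_nat (count q j) * W d R q))"
    by (subst sum.swap) (simp add: sum_distrib_left)
  also have "\<dots> = (\<Sum>j=1..d. of_nat j * R j * PP R (d - j))"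
  proof (rule sum.cong[OF refl])
    fix j assume j: "j \<in> {1..d}"
    have "(\<Sum>q\<in>partitions_of d. of_nat (count q j) * W d R q)
        = (\<Sum>q\<in>{q\<in>partitions_of d. j \<in># q}. of_nat (count q j) * W d R q)"
      by (subst sum.inter_filter[OF finite_partitions]) (rule sum.cong, auto simp: count_eq_zero_iff[symmetric])
    also have "\<dots> = (\<Sum>q\<in>{q\<in>partitions_of d. j \<in># q}. R j * W d R (q - {#j#}))"
      by (rule sum.cong[OF refl]) (use j in \<open>auto intro: W_remove\<close>)
    also have "\<dots> = (\<Sum>q'\<in>partitions_of (d - j). R j * W d R q')"
    proof (rule sum.reindex_bij_witness[of _ "add_mset j" "\<lambda>q. q - {#j#}"])
      fix q assume "q \<in> {q \<in> partitions_of d. j \<in># q}"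
      then show "add_mset j (q - {#j#}) = q" by (simp add: insert_DiffM)
    next
      fix q assume q: "q \<in> {q \<in> partitions_of d. j \<in># q}"
      then have qq: "add_mset j (q - {#j#}) = q" by (simp add: insert_DiffM)
      have s: "sum_mset q = d" using q by (simp add: partitions_of_def)
      have "sum_mset (add_mset j (q - {#j#})) = j + sum_mset (q - {#j#})" by simp
      then have s2: "sum_mset (q - {#j#}) = d - j" using s qq by simp
      have "set_mset (q - {#j#}) \<subseteq> {1..d - j}"
      proof
        fix x assume x: "x \<in># q - {#j#}"
        then have "x \<in># q" by (meson in_diffD)
        then have "x \<ge> 1" using q by (auto simp: partitions_of_def)
        moreover have "x \<le> d - j" using mem_le_sum_mset[OF x] s2 by simp
        ultimately show "x \<in> {1..d - j}" by simp
      qed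
      then show "q - {#j#} \<in> partitions_of (d - j)" using s2 by (simp add: partitions_of_def)
      show "R j * W d R (q - {#j#}) = R j * W d R (q - {#j#})" ..
    next
      fix q assume q: "q \<in> partitions_of (d - j)"
      then show "add_mset j q - {#j#} = q" by simp
      have qs: "set_mset q \<subseteq> {1..d - j}" using q by (simp add: partitions_of_def)
      have "set_mset q \<subseteq> {1..d}"
      proof
        fix x assume "x \<in> set_mset q"
        with qs have "x \<in> {1..d - j}" by blast
        then show "x \<in> {1..d}" by auto
      qed
      then show "add_mset j q \<in> {q \<in> partitions_of d. j \<in># q}"
        using q j by (auto simp: partitions_of_def)
    qed
    also have "\<dots> = R j * PP R (d - j)"
      unfolding PP_def sum_distrib_left
      by (rule sum.cong[OF refl], rule arg_cong[where f="\<lambda>x. R j * x"], rule W_mono) (auto simp: partitions_of_def)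
    finally show "of_nat j * (\<Sum>q\<in>partitions_of d. of_nat (count q j) * W d R q) = of_nat j * R j * PP R (d - j)"
      by simp
  qed
  finally show ?thesis .
qed



lemma swap_tri: "(\<Sum>j=1..d. \<Sum>i=1..d-j. f i j) = (\<Sum>i=1..(d::nat). \<Sum>j=1..d-i. f i j)"
proof -
  have A: "(\<Sum>i=1..d-j. f i j) = (\<Sum>i=1..d. if i + j \<le> d then f i j else 0)" for j
  proof -
    have "{i\<in>{1..d}. i + j \<le> d} = {1..d-j}" by auto
    then show ?thesis by (simp add: sum.inter_filter[symmetric])
  qed
  have B: "(\<Sum>j=1..d-i. f i j) = (\<Sum>j=1..d. if i + j \<le> d then f i j else 0)" for i
  proof -
    have "{j\<in>{1..d}. i + j \<le> d} = {1..d-i}" by auto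
    then show ?thesis by (simp add: sum.inter_filter[symmetric])
  qed
  show ?thesis unfolding A B by (rule sum.swap)
qed

lemma alg3: "D = I + J \<Longrightarrow> I * r * p + r * (J * p) = D * (r * (p::complex))"
  by (simp add: algebra_simps)

lemma PP_deriv:
  fixes R :: "nat \<Rightarrow> complex \<Rightarrow> complex"
  assumes der: "\<And>j. 1 \<le> j \<Longrightarrow> ((\<lambda>w. R j w) has_field_derivative R' j) (at z)"
  shows "((\<lambda>w. PP (\<lambda>j. R j w) d) has_field_derivative (\<Sum>j=1..d. R' j * PP (\<lambda>j. R j z) (d - j))) (at z)"
proof (induction d rule: less_induct)
  case (less d)
  let ?P = "\<lambda>w k. PP (\<lambda>j. R j w) k"
  show ?case
  proof (cases "d = 0")
    case True
    have "(\<lambda>w. ?P w d) = (\<lambda>w. 1)" using True by (simp add: PP_0)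
    then show ?thesis using True by simp
  next
    case False
    have dn: "(of_nat d :: complex) \<noteq> 0" using False by simp
    have eq: "(\<lambda>w. ?P w d) = (\<lambda>w. (\<Sum>j=1..d. of_nat j * R j w * ?P w (d-j)) / of_nat d)"
    proof
      fix w show "?P w d = (\<Sum>j=1..d. of_nat j * R j w * ?P w (d-j)) / of_nat d"
        using PP_rec[of d "\<lambda>j. R j w"] dn by (simp add: field_simps)
    qed
    have ih: "((\<lambda>w. ?P w (d - j)) has_field_derivative (\<Sum>i=1..d-j. R' i * ?P z (d - j - i))) (at z)"
      if "j \<in> {1..d}" for j
      using less[of "d - j"] that by simp
    have Dd: "((\<lambda>w. (\<Sum>j=1..d. of_nat j * R j w * ?P w (d-j)) / of_nat d) has_field_derivative
        (\<Sum>j=1..d. of_nat j * R' j * ?P z (d-j) + of_nat j * R j z * (\<Sum>i=1..d-j. R' i * ?P z (d - j - i))) / of_nat d) (at z)"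
    proof -
      have each: "((\<lambda>w. of_nat j * R j w * ?P w (d-j)) has_field_derivative
          (of_nat j * R' j * ?P z (d-j) + of_nat j * R j z * (\<Sum>i=1..d-j. R' i * ?P z (d - j - i)))) (at z)"
        if "j \<in> {1..d}" for j
      proof -
        have dj: "((\<lambda>w. R j w) has_field_derivative R' j) (at z)" using that by (intro der) simp
        show ?thesis using DERIV_mult[OF DERIV_cmult[OF dj, of "of_nat j"] ih[OF that]] by (simp add: mult.commute)
      qed
      show ?thesis by (rule DERIV_cdivide, rule DERIV_sum, rule each)
    qed
    have val: "(\<Sum>j=1..d. of_nat j * R' j * ?P z (d-j) + of_nat j * R j z * (\<Sum>i=1..d-j. R' i * ?P z (d - j - i))) / of_nat d
        = (\<Sum>j=1..d. R' j * ?P z (d - j))"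
    proof -
      have r: "of_nat (d - i) * ?P z (d - i) = (\<Sum>j=1..d-i. of_nat j * R j z * ?P z (d - i - j))" for i
        by (rule PP_rec)
      have S2: "(\<Sum>j=1..d. of_nat j * R j z * (\<Sum>i=1..d-j. R' i * ?P z (d - j - i)))
          = (\<Sum>j=1..d. \<Sum>i=1..d-j. R' i * (of_nat j * R j z * ?P z (d - i - j)))"
      proof (rule sum.cong[OF refl])
        fix j assume "j \<in> {1..d}"
        have "of_nat j * R j z * (\<Sum>i=1..d-j. R' i * ?P z (d - j - i))
            = (\<Sum>i=1..d-j. of_nat j * R j z * (R' i * ?P z (d - j - i)))"
          by (rule sum_distrib_left)
        also have "\<dots> = (\<Sum>i=1..d-j. R' i * (of_nat j * R j z * ?P z (d - i - j)))"
        proof (rule sum.cong[OF refl])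
          fix i assume "i \<in> {1..d-j}"
          have "d - j - i = d - i - j" by simp
          then show "of_nat j * R j z * (R' i * ?P z (d - j - i)) = R' i * (of_nat j * R j z * ?P z (d - i - j))"
            by (simp only: mult_ac)
        qed
        finally show "of_nat j * R j z * (\<Sum>i=1..d-j. R' i * ?P z (d - j - i))
            = (\<Sum>i=1..d-j. R' i * (of_nat j * R j z * ?P z (d - i - j)))" .
      qed
      have S4: "(\<Sum>i=1..d. \<Sum>j=1..d-i. R' i * (of_nat j * R j z * ?P z (d - i - j)))
          = (\<Sum>i=1..d. R' i * (of_nat (d - i) * ?P z (d - i)))"
        unfolding r by (simp only: sum_distrib_left)
      have S5: "(\<Sum>j=1..d. of_nat j * R' j * ?P z (d-j)) + (\<Sum>i=1..d. R' i * (of_nat (d - i) * ?P z (d - i)))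
          = of_nat d * (\<Sum>i=1..d. R' i * ?P z (d - i))"
        unfolding sum.distrib[symmetric] sum_distrib_left
      proof (rule sum.cong[OF refl])
        fix i assume i: "i \<in> {1..d}"
        have "(of_nat d :: complex) = of_nat i + of_nat (d - i)" using i by (simp add: of_nat_diff)
        then show "of_nat i * R' i * ?P z (d-i) + R' i * (of_nat (d - i) * ?P z (d - i)) = of_nat d * (R' i * ?P z (d - i))"
          by (rule alg3)
      qed
      have "(\<Sum>j=1..d. of_nat j * R' j * ?P z (d-j) + of_nat j * R j z * (\<Sum>i=1..d-j. R' i * ?P z (d - j - i)))
          = of_nat d * (\<Sum>i=1..d. R' i * ?P z (d - i))"
      proof -
        have SW: "(\<Sum>j=1..d. \<Sum>i=1..d-j. R' i * (of_nat j * R j z * ?P z (d - i - j)))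
           = (\<Sum>i=1..d. \<Sum>j=1..d-i. R' i * (of_nat j * R j z * ?P z (d - i - j)))"
          by (rule swap_tri)
        show ?thesis unfolding sum.distrib S2 SW S4 S5 ..
      qed
      then show ?thesis using dn by simp
    qed
    show ?thesis unfolding eq using Dd val by simp
  qed
qed



lemma alg4: "k * e = - cc \<Longrightarrow> (k * e) * (Fz * H - S) = e * H * (k * Fz) + cc * (S::complex)"
  by algebra

lemma R_deriv:
  fixes a c :: "nat \<Rightarrow> complex"
  assumes n: "n > 0" and m: "m > 0" and m1: "m = gcd m N * m1" and j: "1 \<le> j"
    and za: "\<And>i. i \<in> {1..N} \<Longrightarrow> z \<noteq> a i"
  shows "((\<lambda>w. Rfun N n m m1 a c j w) has_field_derivative
     (of_nat (j*n) / of_nat m * (\<Sum>i=1..N. 1 / (z - a i)) * Rfun N n m m1 a c j z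
      + (\<Sum>i=1..N. (if m1 dvd j then c j * bsum N a (of_nat (j*n) / of_nat m) (N*j*n div m) (a i) else 0) / (z - a i)))) (at z)"
proof (cases "m1 dvd j")
  case False
  then have "(\<lambda>w. Rfun N n m m1 a c j w) = (\<lambda>w. 0)" by (simp add: Rfun_def fun_eq_iff)
  then show ?thesis using False by (simp add: Rfun_def)
next
  case True
  define e :: complex where "e = of_nat (j*n) / of_nat m"
  define K where "K = N*j*n div m"
  have KN: "of_nat K = of_nat N * e"
  proof -
    obtain t where t: "j = m1 * t" using True by (auto simp: dvd_def)
    obtain u where u: "N = gcd m N * u" by (metis dvd_def gcd_dvd2)
    have h: "N*j*n = m * (u*t*n)" using t u m1 by (metis mult.commute mult.left_commute)
    have "K = u*t*n" unfolding K_def h using m by simp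
    then have "K * m = N*j*n" unfolding h by simp
    then have "(of_nat K :: complex) * of_nat m = of_nat N * of_nat j * of_nat n"
      by (metis of_nat_mult)
    then show ?thesis unfolding e_def using m by (simp add: field_simps)
  qed
  define G where "G = (\<Prod>i\<in>{1..N}. hh e (a i))"
  define \<gamma> where "\<gamma> s = (-1)^K * G $ s" for s
  define F where "F w = (\<Sum>s\<le>K. \<gamma> s * w ^ (K - s))" for w
  have bF: "bsum N a e K w = F w" for w
    unfolding F_def \<gamma>_def G_def bsum_fps by (simp add: mult.assoc)
  have rec: "of_nat (K - u) * \<gamma> u = e * (\<Sum>s\<le>u. \<gamma> s * (\<Sum>i=1..N. a i ^ (u - s)))" if "u < K" for u
  proof -
    have "of_nat (K - u) * G $ u = e * (\<Sum>s\<le>u. G $ s * (\<Sum>i=1..N. a i ^ (u - s)))"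
      unfolding G_def by (rule newton2[OF KN that])
    then have "(-1)^K * (of_nat (K - u) * G $ u) = (-1)^K * (e * (\<Sum>s\<le>u. G $ s * (\<Sum>i=1..N. a i ^ (u - s))))"
      by simp
    then show ?thesis unfolding \<gamma>_def by (simp add: sum_distrib_left mult_ac)
  qed
  have Fd: "(F has_field_derivative (\<Sum>s\<le>K. \<gamma> s * (of_nat (K - s) * z ^ (K - s - 1)))) (at z)"
    unfolding F_def
  proof (rule DERIV_sum, rule DERIV_cmult)
    fix s
    show "((\<lambda>w. w ^ (K - s)) has_field_derivative of_nat (K - s) * z ^ (K - s - 1)) (at z)"
      using DERIV_power[OF DERIV_ident, of "K - s" z UNIV] by simp
  qed
  have Fid: "(\<Sum>s\<le>K. \<gamma> s * (of_nat (K - s) * z ^ (K - s - 1))) = e * (\<Sum>i=1..N. (F z - F (a i)) / (z - a i))"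
    unfolding F_def by (rule F_ident[OF za rec]) auto
  define \<kappa> where "\<kappa> = - (of_nat m * c j / (of_nat j * of_nat n))"
  have Rf: "Rfun N n m m1 a c j w = \<kappa> * F w" for w
    unfolding Rfun_def \<kappa>_def using True bF by (simp add: e_def K_def)
  have ke: "\<kappa> * e = - c j" unfolding \<kappa>_def e_def using n m j by (simp add: field_simps)
  have split: "(\<Sum>i=1..N. (F z - F (a i)) / (z - a i)) = F z * (\<Sum>i=1..N. 1 / (z - a i)) - (\<Sum>i=1..N. F (a i) / (z - a i))"
    by (simp add: diff_divide_distrib sum_subtractf sum_distrib_left)
  have "((\<lambda>w. Rfun N n m m1 a c j w) has_field_derivative \<kappa> * (e * (\<Sum>i=1..N. (F z - F (a i)) / (z - a i)))) (at z)"
    unfolding Rf using DERIV_cmult[OF Fd, of \<kappa>] Fid by simp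
  moreover have "\<kappa> * (e * (\<Sum>i=1..N. (F z - F (a i)) / (z - a i)))
     = e * (\<Sum>i=1..N. 1 / (z - a i)) * (\<kappa> * F z) + (\<Sum>i=1..N. c j * F (a i) / (z - a i))"
  proof -
    have "\<kappa> * (e * (\<Sum>i=1..N. (F z - F (a i)) / (z - a i))) = (\<kappa> * e) * (F z * (\<Sum>i=1..N. 1 / (z - a i)) - (\<Sum>i=1..N. F (a i) / (z - a i)))"
      unfolding split by (simp only: mult.assoc)
    also have "\<dots> = e * (\<Sum>i=1..N. 1 / (z - a i)) * (\<kappa> * F z) + c j * (\<Sum>i=1..N. F (a i) / (z - a i))"
      by (rule alg4[OF ke])
    also have "c j * (\<Sum>i=1..N. F (a i) / (z - a i)) = (\<Sum>i=1..N. c j * F (a i) / (z - a i))"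
      by (simp add: sum_distrib_left)
    finally show ?thesis .
  qed
  ultimately show ?thesis using True unfolding Rf bF[symmetric] e_def K_def by simp
qed

lemma L_deriv:
  assumes U: "open U" and hol: "L holomorphic_on U" and br: "\<And>w. w \<in> U \<Longrightarrow> exp (L w) = w - b"
    and z: "z \<in> U"
  shows "(L has_field_derivative 1 / (z - b)) (at z)" and "z \<noteq> b"
proof -
  have "L field_differentiable at z" by (rule holomorphic_on_imp_differentiable_at[OF hol U z])
  then have d: "(L has_field_derivative deriv L z) (at z)" by (simp add: DERIV_deriv_iff_field_differentiable)
  have e: "((\<lambda>w. exp (L w)) has_field_derivative exp (L z) * deriv L z) (at z)"
    by (rule DERIV_fun_exp[OF d])
  have e2: "((\<lambda>w. w - b) has_field_derivative exp (L z) * deriv L z) (at z)"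
    by (rule has_field_derivative_transform_within_open[OF e U z]) (simp add: br)
  have e3: "((\<lambda>w. w - b) has_field_derivative 1) (at z)"
  proof -
    have "((\<lambda>w. w - b) has_field_derivative 1 - 0) (at z)" by (rule DERIV_diff[OF DERIV_ident DERIV_const])
    then show ?thesis by simp
  qed
  have "exp (L z) * deriv L z = 1" using DERIV_unique[OF e2 e3] .
  then have dz: "(z - b) * deriv L z = 1" using br[OF z] by simp
  then show "z \<noteq> b" by auto
  then have "deriv L z = 1 / (z - b)" using dz by (simp add: field_simps)
  then show "(L has_field_derivative 1 / (z - b)) (at z)" using d by simp
qed

lemma D_deriv:
  fixes \<beta> :: "nat \<Rightarrow> complex"
  assumes Ld: "\<And>i. i \<in> {1..N} \<Longrightarrow> (L i has_field_derivative 1 / (z - a i)) (at z)"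
  shows "((\<lambda>w. \<Prod>i=1..N. exp (\<beta> i * L i w)) has_field_derivative
          (\<Prod>i=1..N. exp (\<beta> i * L i z)) * (\<Sum>i=1..N. \<beta> i / (z - a i))) (at z)"
proof -
  have eq: "(\<lambda>w. \<Prod>i=1..N. exp (\<beta> i * L i w)) = (\<lambda>w. exp (\<Sum>i=1..N. \<beta> i * L i w))"
    by (simp add: exp_sum)
  have s: "((\<lambda>w. \<Sum>i=1..N. \<beta> i * L i w) has_field_derivative (\<Sum>i=1..N. \<beta> i * (1 / (z - a i)))) (at z)"
    by (rule DERIV_sum, rule DERIV_cmult, rule Ld)
  have "((\<lambda>w. exp (\<Sum>i=1..N. \<beta> i * L i w)) has_field_derivative
      exp (\<Sum>i=1..N. \<beta> i * L i z) * (\<Sum>i=1..N. \<beta> i * (1 / (z - a i)))) (at z)"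
    by (rule DERIV_fun_exp[OF s])
  then show ?thesis unfolding eq by (simp add: exp_sum)
qed



lemma alg5:
  fixes X c1 dd P SN lamL lamK D :: complex
  assumes "X = c1 * (dd * P) + SN" "lamL = lamK - dd * c1"
  shows "X * D + (D * lamL) * P = D * (lamK * P) + SN * D"
  using assms by algebra

theorem corollary1:
  fixes p n m N m1 :: nat
    and a \<theta> c :: "nat \<Rightarrow> complex"
    and U :: "complex set"
    and L :: "nat \<Rightarrow> complex \<Rightarrow> complex"
  assumes pos: "p > 0" "n > 0" "m > 0" "N > 0"
    and cop: "coprime n m"
    and s_gt: "gcd m N > 1"
    and m1_def: "m = gcd m N * m1"
    and distinct: "inj_on a {1..N}"
    and U_open: "open U"
    and L_holo: "\<And>i. i \<in> {1..N} \<Longrightarrow> L i holomorphic_on U"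
    and L_branch: "\<And>i z. i \<in> {1..N} \<Longrightarrow> z \<in> U \<Longrightarrow> exp (L i z) = z - a i"
  shows "\<forall>z\<in>U. \<forall>k\<in>{1..p}. \<forall>l\<in>{1..p}.
    ((\<lambda>w. Mmat N n m m1 a c k l w * (\<Prod>i=1..N. exp (beta n m \<theta> i l * L i w)))
      has_field_derivative
       (\<Sum>i=1..N. \<Sum>r=1..p. Bmat N n m m1 a \<theta> c i k r
           * (Mmat N n m m1 a c r l z * (\<Prod>i'=1..N. exp (beta n m \<theta> i' l * L i' z)))
           / (z - a i))) (at z)"
proof (intro ballI)
  fix z k l assume z: "z \<in> U" and k: "k \<in> {1..p}" and l: "l \<in> {1..p}"
  have Ld: "(L i has_field_derivative 1 / (z - a i)) (at z)" if "i \<in> {1..N}" for i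
    by (rule L_deriv(1)[OF U_open L_holo[OF that] L_branch[OF that] z])
  have za: "z \<noteq> a i" if "i \<in> {1..N}" for i
    by (rule L_deriv(2)[OF U_open L_holo[OF that] L_branch[OF that] z])
  define Dl where "Dl = (\<lambda>w. \<Prod>i=1..N. exp (beta n m \<theta> i l * L i w))"
  define lam where "lam r = (\<Sum>i=1..N. beta n m \<theta> i r / (z - a i))" for r
  define H where "H = (\<Sum>i=1..N. 1 / (z - a i))"
  have Dd: "(Dl has_field_derivative Dl z * lam l) (at z)"
    unfolding Dl_def lam_def by (rule D_deriv[where \<beta>="\<lambda>i. beta n m \<theta> i l", OF Ld])
  let ?B = "Bmat N n m m1 a \<theta> c"
  let ?M = "Mmat N n m m1 a c"
  have main: "((\<lambda>w. ?M k l w * Dl w) has_field_derivative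
      (\<Sum>i=1..N. \<Sum>r=1..p. ?B i k r * (?M r l z * Dl z) / (z - a i))) (at z)"
  proof (cases "l < k")
    case True
    have M0: "?M k l w = 0" for w using True by (simp add: Mmat_def)
    have R0: "?B i k r * ?M r l z = 0" for i r
    proof (cases "r < k")
      case True then show ?thesis by (simp add: Bmat_def)
    next
      case False
      then have "l < r" using \<open>l < k\<close> by simp
      then show ?thesis by (simp add: Mmat_def)
    qed
    have "(\<lambda>w. ?M k l w * Dl w) = (\<lambda>w. 0)" by (simp add: M0)
    moreover have "(\<Sum>i=1..N. \<Sum>r=1..p. ?B i k r * (?M r l z * Dl z) / (z - a i)) = 0"
    proof -
      have z0: "?B i k r * (?M r l z * Dl z) / (z - a i) = 0" for i r
      proof -
        have "?B i k r * (?M r l z * Dl z) = (?B i k r * ?M r l z) * Dl z" by (rule mult.assoc[symmetric])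
        then show ?thesis using R0[of i r] by simp
      qed
      show ?thesis by (simp only: z0 sum.neutral_const)
    qed
    ultimately show ?thesis by simp
  next
    case False
    then have kl: "k \<le> l" by simp
    define d where "d = l - k"
    define P where "P t = PP (\<lambda>j. Rfun N n m m1 a c j z) t" for t
    define Nj where "Nj j = (\<Sum>i=1..N. ?B i k (k + j) / (z - a i))" for j
    have MPP: "?M r l w = PP (\<lambda>j. Rfun N n m m1 a c j w) (l - r)" if "r \<le> l" for r w
    proof (cases "r = l")
      case True then show ?thesis by (simp add: Mmat_def PP_0)
    next
      case False then show ?thesis using that by (simp add: Mmat_def PP_def W_def)
    qed
    have Bkj: "?B i k (k + j) = (if m1 dvd j then c j * bsum N a (of_nat (j*n) / of_nat m) (N*j*n div m) (a i) else 0)"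
      if "1 \<le> j" for i j
      using that by (simp add: Bmat_def)
    have Rd: "((\<lambda>w. Rfun N n m m1 a c j w) has_field_derivative
        (of_nat (j*n) / of_nat m * H * Rfun N n m m1 a c j z + Nj j)) (at z)" if "1 \<le> j" for j
      unfolding H_def Nj_def Bkj[OF that]
      by (rule R_deriv[OF pos(2) pos(3) m1_def that za])
    have PPd: "((\<lambda>w. PP (\<lambda>j. Rfun N n m m1 a c j w) d) has_field_derivative
        (\<Sum>j=1..d. (of_nat (j*n) / of_nat m * H * Rfun N n m m1 a c j z + Nj j) * P (d - j))) (at z)"
      unfolding P_def by (rule PP_deriv[OF Rd])
    have feq: "(\<lambda>w. ?M k l w * Dl w) = (\<lambda>w. PP (\<lambda>j. Rfun N n m m1 a c j w) d * Dl w)"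
      using MPP[OF kl] d_def by simp
    have D1: "((\<lambda>w. ?M k l w * Dl w) has_field_derivative
        (\<Sum>j=1..d. (of_nat (j*n) / of_nat m * H * Rfun N n m m1 a c j z + Nj j) * P (d - j)) * Dl z
        + (Dl z * lam l) * P d) (at z)"
      unfolding feq P_def by (rule DERIV_mult[OF PPd[unfolded P_def] Dd])
    define T where "T r = (\<Sum>i=1..N. ?B i k r / (z - a i))" for r
    have RHS1: "(\<Sum>i=1..N. \<Sum>r=1..p. ?B i k r * (?M r l z * Dl z) / (z - a i))
        = (\<Sum>r=1..p. T r * (?M r l z * Dl z))"
    proof -
      have "(\<Sum>i=1..N. \<Sum>r=1..p. ?B i k r * (?M r l z * Dl z) / (z - a i))
          = (\<Sum>r=1..p. \<Sum>i=1..N. ?B i k r * (?M r l z * Dl z) / (z - a i))"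
        by (rule sum.swap)
      also have "\<dots> = (\<Sum>r=1..p. T r * (?M r l z * Dl z))"
        unfolding T_def sum_distrib_right by (rule sum.cong[OF refl], rule sum.cong[OF refl]) simp
      finally show ?thesis .
    qed
    have RHS2: "(\<Sum>r=1..p. T r * (?M r l z * Dl z)) = (\<Sum>r=k..l. T r * (?M r l z * Dl z))"
    proof (rule sum.mono_neutral_right)
      show "finite {1..p}" by simp
      show "{k..l} \<subseteq> {1..p}" using k l by auto
      show "\<forall>r\<in>{1..p} - {k..l}. T r * (?M r l z * Dl z) = 0"
      proof
        fix r assume r: "r \<in> {1..p} - {k..l}"
        show "T r * (?M r l z * Dl z) = 0"
        proof (cases "r < k")
          case True
          then have "T r = 0" unfolding T_def by (simp add: Bmat_def)
          then show ?thesis by simp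
        next
          case False
          then have "l < r" using r by auto
          then have "?M r l z = 0" by (simp add: Mmat_def)
          then show ?thesis by simp
        qed
      qed
    qed
    have RHS3: "(\<Sum>r=k..l. T r * (?M r l z * Dl z)) = T k * (?M k l z * Dl z) + (\<Sum>j=1..d. T (j + k) * (?M (j + k) l z * Dl z))"
    proof -
      have "(\<Sum>r=k..l. T r * (?M r l z * Dl z)) = T k * (?M k l z * Dl z) + (\<Sum>r=Suc k..l. T r * (?M r l z * Dl z))"
        by (rule sum.atLeast_Suc_atMost[OF kl])
      also have "(\<Sum>r=Suc k..l. T r * (?M r l z * Dl z)) = (\<Sum>r=1+k..d+k. T r * (?M r l z * Dl z))"
        using kl d_def by simp
      also have "\<dots> = (\<Sum>j=1..d. T (j + k) * (?M (j + k) l z * Dl z))"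
        by (rule sum.shift_bounds_cl_nat_ivl)
      finally show ?thesis .
    qed
    have Tk: "T k = lam k" unfolding T_def lam_def by (simp add: Bmat_def)
    have Mk: "?M k l z = P d" unfolding P_def d_def using MPP[OF kl] by simp
    have RHS4: "(\<Sum>j=1..d. T (j + k) * (?M (j + k) l z * Dl z)) = (\<Sum>j=1..d. Nj j * P (d - j)) * Dl z"
      unfolding sum_distrib_right
    proof (rule sum.cong[OF refl])
      fix j assume j: "j \<in> {1..d}"
      have "T (j + k) = Nj j" unfolding T_def Nj_def by (simp add: add.commute)
      moreover have "?M (j + k) l z = P (d - j)"
      proof -
        have jk: "j + k \<le> l" and e: "l - (j + k) = d - j" using j d_def by auto
        show ?thesis unfolding P_def MPP[OF jk] e ..
      qed
      ultimately show "T (j + k) * (?M (j + k) l z * Dl z) = Nj j * P (d - j) * Dl z"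
        by (simp add: mult.assoc)
    qed
    have RHS: "(\<Sum>i=1..N. \<Sum>r=1..p. ?B i k r * (?M r l z * Dl z) / (z - a i))
        = Dl z * (lam k * P d) + (\<Sum>j=1..d. Nj j * P (d - j)) * Dl z"
      unfolding RHS1 RHS2 RHS3 Tk Mk RHS4 by (simp add: mult_ac)
    have X: "(\<Sum>j=1..d. (of_nat (j*n) / of_nat m * H * Rfun N n m m1 a c j z + Nj j) * P (d - j))
        = (of_nat n / of_nat m * H) * (of_nat d * P d) + (\<Sum>j=1..d. Nj j * P (d - j))"
    proof -
      have "(\<Sum>j=1..d. (of_nat (j*n) / of_nat m * H * Rfun N n m m1 a c j z + Nj j) * P (d - j))
          = (\<Sum>j=1..d. (of_nat n / of_nat m * H) * (of_nat j * Rfun N n m m1 a c j z * P (d - j)))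
            + (\<Sum>j=1..d. Nj j * P (d - j))"
        unfolding sum.distrib[symmetric]
        by (rule sum.cong[OF refl]) (simp add: algebra_simps)
      also have "(\<Sum>j=1..d. (of_nat n / of_nat m * H) * (of_nat j * Rfun N n m m1 a c j z * P (d - j)))
          = (of_nat n / of_nat m * H) * (of_nat d * P d)"
        unfolding sum_distrib_left[symmetric] P_def by (simp only: PP_rec)
      finally show ?thesis .
    qed
    have lamlk: "lam l = lam k - of_nat d * (of_nat n / of_nat m * H)"
    proof -
      have b: "beta n m \<theta> i l = beta n m \<theta> i k - of_nat d * (of_nat n / of_nat m)" for i
      proof -
        have "(l - 1) * n = (k - 1) * n + d * n" using kl k d_def by (simp add: algebra_simps)
        then have "(of_nat ((l - 1) * n) :: complex) = of_nat ((k - 1) * n) + of_nat d * of_nat n"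
          by simp
        then show ?thesis unfolding beta_def by (simp add: add_divide_distrib)
      qed
      have "lam l = (\<Sum>i=1..N. beta n m \<theta> i k / (z - a i) - of_nat d * (of_nat n / of_nat m) * (1 / (z - a i)))"
        unfolding lam_def b by (rule sum.cong[OF refl]) (simp add: diff_divide_distrib)
      also have "\<dots> = lam k - of_nat d * (of_nat n / of_nat m * H)"
        unfolding lam_def H_def sum_subtractf sum_distrib_left[symmetric] by (simp only: mult.assoc)
      finally show ?thesis .
    qed
    show ?thesis unfolding RHS using D1 alg5[OF X lamlk] by simp
  qed
  then show "((\<lambda>w. ?M k l w * (\<Prod>i=1..N. exp (beta n m \<theta> i l * L i w))) has_field_derivative
       (\<Sum>i=1..N. \<Sum>r=1..p. ?B i k r * (?M r l z * (\<Prod>i'=1..N. exp (beta n m \<theta> i' l * L i' z))) / (z - a i))) (at z)"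
    unfolding Dl_def .
qed

end
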